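(* Let $t\geq 4$ with $t\equiv 0\pmod 4$. Then the multiset $\{1,2^b,t^c\}$ admits a linear realization for every integer $b\geq t-2$ and every positive odd integer $c$.
   Context: $\{1,2^b,t^{c}\}$ is the multiset with one $1$, $b$ copies of $2$ and $c$ copies of $t$. For a multiset $L$ of positive integers with $|L|=v-1$, each at most $v-1$, a linear realization of $L$ is a Hamiltonian path $[x_0,\dots,x_{v-1}]$ of the complete graph on $\{0,\dots,v-1\}$ such that the multiset $\{|x_i-x_{i+1}| : i=0,\dots,v-2\}$ equals $L$. *)

theory Defs
  imports Main "HOL-Library.Multiset"
begin

text \<open>A Hamiltonian path of the complete graph on {0..v-1} is a list listing every vertex
exactly once. Its edge-length multiset collects |x_i - x_(i+1)|.\<close>

definition ham_path :: "nat \<Rightarrow> nat list \<Rightarrow> bool" where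
  "ham_path v xs \<longleftrightarrow> distinct xs \<and> set xs = {0..<v}"

definition edge_lengths :: "nat list \<Rightarrow> nat multiset" where
  "edge_lengths xs = mset (map (\<lambda>i. if xs ! i \<le> xs ! Suc i then xs ! Suc i - xs ! i
                                   else xs ! i - xs ! Suc i) [0..<length xs - 1])"

definition linear_realization :: "nat multiset \<Rightarrow> nat list \<Rightarrow> bool" where
  "linear_realization L xs \<longleftrightarrow>
     (let v = size L + 1 in
       (\<forall>l \<in># L. 0 < l \<and> l \<le> v - 1) \<and> ham_path v xs \<and> edge_lengths xs = L)"

definition has_linear_realization :: "nat multiset \<Rightarrow> bool" where
  "has_linear_realization L \<longleftrightarrow> (\<exists>xs. linear_realization L xs)"

definition ms_1_2_t :: "nat \<Rightarrow> nat \<Rightarrow> nat \<Rightarrow> nat multiset" where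
  "ms_1_2_t b t c = {#1#} + replicate_mset b 2 + replicate_mset c t"

end

theory Submission
  imports Defs
begin

definition dd :: "nat \<Rightarrow> nat \<Rightarrow> nat" where
  "dd a b = (if a \<le> b then b - a else a - b)"

fun el :: "nat list \<Rightarrow> nat multiset" where
  "el (a # b # xs) = add_mset (dd a b) (el (b # xs))"
| "el _ = {#}"

lemma edge_lengths_cons2:
  "edge_lengths (a # b # xs) = add_mset (dd a b) (edge_lengths (b # xs))"
proof -
  let ?f = "\<lambda>ys i. dd (ys ! i) (ys ! Suc i)"
  have e: "edge_lengths ys = mset (map (?f ys) [0..<length ys - 1])" for ys
    unfolding edge_lengths_def dd_def by simp
  have u: "[0..<length (a # b # xs) - 1] = 0 # map Suc [0..<length (b # xs) - 1]"
    by (simp add: upt_conv_Cons map_Suc_upt del: upt_Suc)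
  have m: "map (?f (a # b # xs)) (map Suc zs) = map (?f (b # xs)) zs" for zs
    by simp
  have "mset (map (?f (a # b # xs)) (0 # map Suc [0..<length (b # xs) - 1]))
      = add_mset (?f (a # b # xs) 0) (mset (map (?f (b # xs)) [0..<length (b # xs) - 1]))"
    by (simp only: list.map m mset.simps)
  moreover have "?f (a # b # xs) 0 = dd a b" by simp
  ultimately show ?thesis unfolding e u by simp
qed

lemma edge_lengths_el: "edge_lengths xs = el xs"
proof (induction xs rule: el.induct)
  case (1 a b xs)
  then show ?case by (simp only: edge_lengths_cons2 el.simps)
qed (simp_all add: edge_lengths_def)

lemma el_split: "el (xs @ y # ys) = el (xs @ [y]) + el (y # ys)"
  by (induction xs rule: el.induct) auto

lemma el_rev: "el (rev xs) = el xs"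
proof (induction xs rule: el.induct)
  case (1 a b xs)
  have "el (rev (a # b # xs)) = el (rev xs @ [b] @ [a])" by simp
  also have "\<dots> = el (rev xs @ [b]) + el [b, a]" using el_split[of "rev xs" b "[a]"] by simp
  also have "\<dots> = el (b # xs) + {#dd a b#}" using 1 by (simp add: dd_def)
  finally show ?case by simp
qed auto

lemma el_shift: "el (map (\<lambda>y. y + k) xs) = el xs"
  by (induction xs rule: el.induct) (auto simp: dd_def)

lemma el_app: "xs \<noteq> [] \<Longrightarrow> ys \<noteq> [] \<Longrightarrow> el (xs @ ys) = el xs + el ys + {#dd (last xs) (hd ys)#}"
proof -
  assume "xs \<noteq> []" "ys \<noteq> []"
  then obtain xs' a ys' bb where x: "xs = xs' @ [a]" and y: "ys = bb # ys'"
    by (metis list.exhaust rev_exhaust)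
  have "el (xs' @ a # bb # ys') = el (xs' @ [a]) + el (a # bb # ys')" by (rule el_split)
  then show ?thesis using x y by simp
qed

definition nn :: "nat \<Rightarrow> nat \<Rightarrow> nat \<Rightarrow> nat" where
  "nn t v r = v div t + (if r < v mod t then 1 else 0)"
definition cls :: "nat \<Rightarrow> nat \<Rightarrow> nat \<Rightarrow> nat list" where
  "cls t v r = map (\<lambda>i. r + t * i) [0..<nn t v r]"
definition ctop :: "nat \<Rightarrow> nat \<Rightarrow> nat \<Rightarrow> nat" where
  "ctop t v r = r + t * (nn t v r - 1)"

lemma el_prog: "el (map (\<lambda>i. r + t * i) [0..<n]) = replicate_mset (n - 1) t"
proof (induction n)
  case 0 then show ?case by simp
next
  case (Suc n)
  show ?case
  proof (cases n)
    case 0 then show ?thesis by simp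
  next
    case (Suc m)
    have "map (\<lambda>i. r + t * i) [0..<Suc n] = map (\<lambda>i. r + t * i) [0..<n] @ [r + t * n]" by simp
    moreover have "last (map (\<lambda>i. r + t * i) [0..<n]) = r + t * m" using Suc by simp
    ultimately show ?thesis using Suc.IH Suc el_app[of "map (\<lambda>i. r + t * i) [0..<n]" "[r + t * n]"]
      by (simp add: dd_def algebra_simps)
  qed
qed

lemma nn_pos: "0 < t \<Longrightarrow> t \<le> v \<Longrightarrow> 0 < nn t v r"
  unfolding nn_def by (simp add: div_greater_zero_iff)

lemma cls_nonempty: "0 < t \<Longrightarrow> t \<le> v \<Longrightarrow> cls t v r \<noteq> []"
  using nn_pos[of t v r] unfolding cls_def by simp

lemma hd_cls: "0 < t \<Longrightarrow> t \<le> v \<Longrightarrow> hd (cls t v r) = r"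
  using nn_pos[of t v r] unfolding cls_def by (simp add: hd_map)

lemma last_cls: "0 < t \<Longrightarrow> t \<le> v \<Longrightarrow> last (cls t v r) = ctop t v r"
  using nn_pos[of t v r] unfolding cls_def ctop_def by (simp add: last_map)

lemma el_cls: "el (cls t v r) = replicate_mset (nn t v r - 1) t"
  unfolding cls_def by (rule el_prog)

lemma distinct_cls: "0 < t \<Longrightarrow> distinct (cls t v r)"
  unfolding cls_def by (simp add: distinct_map inj_on_def)

lemma mem_cls_iff:
  assumes "0 < t" "r < t"
  shows "r + t * i < v \<longleftrightarrow> i < nn t v r"
proof -
  define q where "q = v div t"
  define w where "w = v mod t"
  have v: "v = t * q + w" and wt: "w < t" using assms by (simp_all add: q_def w_def)
  have nq: "nn t v r = q + (if r < w then 1 else 0)" by (simp add: nn_def q_def w_def)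
  show ?thesis
  proof (cases "i < q")
    case True
    then have "t * i + t \<le> t * q" by (metis Suc_leI mult_Suc_right mult_le_mono2 add.commute)
    then have "r + t * i < v" using v assms by linarith
    then show ?thesis using True unfolding nq by simp
  next
    case False
    show ?thesis
    proof (cases "i = q")
      case True then show ?thesis unfolding nq using v by auto
    next
      case False2: False
      then have "Suc q \<le> i" using False by simp
      then have "t * Suc q \<le> t * i" by (rule mult_le_mono2)
      then have "\<not> r + t * i < v" using v wt by simp
      then show ?thesis using False False2 unfolding nq by auto
    qed
  qed
qed

lemma set_cls:
  assumes "0 < t" "r < t"
  shows "set (cls t v r) = {x \<in> {0..<v}. x mod t = r}"
proof
  show "set (cls t v r) \<subseteq> {x \<in> {0..<v}. x mod t = r}"
  proof
    fix x assume "x \<in> set (cls t v r)"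
    then obtain i where i: "i < nn t v r" and x: "x = r + t * i" unfolding cls_def by auto
    have "x < v" using i mem_cls_iff[OF assms, of i v] x by simp
    moreover have "x mod t = r" using x assms(2) by simp
    ultimately show "x \<in> {x \<in> {0..<v}. x mod t = r}" by simp
  qed
next
  show "{x \<in> {0..<v}. x mod t = r} \<subseteq> set (cls t v r)"
  proof
    fix x assume x: "x \<in> {x \<in> {0..<v}. x mod t = r}"
    then have xm: "x mod t = r" and xv: "x < v" by auto
    have e: "x = r + t * (x div t)" using xm by (metis add.commute mult_div_mod_eq)
    have "x div t < nn t v r" using mem_cls_iff[OF assms, of "x div t" v] xv e by simp
    then have "x \<in> (\<lambda>i. r + t * i) ` {0..<nn t v r}" using e by (intro image_eqI[of x _ "x div t"]) auto
    then show "x \<in> set (cls t v r)" unfolding cls_def by simp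
  qed
qed

lemma mset_cls:
  assumes "0 < t" "r < t"
  shows "mset (cls t v r) = filter_mset (\<lambda>x. x mod t = r) (mset [0..<v])"
proof -
  have "mset (cls t v r) = mset (filter (\<lambda>x. x mod t = r) [0..<v])"
    using set_eq_iff_mset_eq_distinct[of "cls t v r" "filter (\<lambda>x. x mod t = r) [0..<v]"]
      distinct_cls[OF assms(1)] set_cls[OF assms] by auto
  then show ?thesis by simp
qed

fun snk :: "nat \<Rightarrow> nat \<Rightarrow> bool \<Rightarrow> nat list \<Rightarrow> nat list" where
  "snk t v b [] = []"
| "snk t v b (r # R) = (if b then cls t v r else rev (cls t v r)) @ snk t v (\<not> b) R"

fun JJ :: "nat \<Rightarrow> nat \<Rightarrow> bool \<Rightarrow> nat list \<Rightarrow> nat list" where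
  "JJ t v b (r # r' # R) = (if b then dd (ctop t v r) (ctop t v r') else dd r r') # JJ t v (\<not> b) (r' # R)"
| "JJ t v b _ = []"

lemma rep_plus: "replicate_mset (m + n) x = replicate_mset m x + replicate_mset n x"
  by (induction m) auto

lemma hd_snk: "0 < t \<Longrightarrow> t \<le> v \<Longrightarrow> R \<noteq> [] \<Longrightarrow> hd (snk t v b R) = (if b then hd R else ctop t v (hd R))"
  by (cases R) (auto simp: hd_cls cls_nonempty hd_rev last_cls)

lemma snk_nonempty: "0 < t \<Longrightarrow> t \<le> v \<Longrightarrow> R \<noteq> [] \<Longrightarrow> snk t v b R \<noteq> []"
  by (cases R) (auto simp: cls_nonempty)

lemma last_snk: "0 < t \<Longrightarrow> t \<le> v \<Longrightarrow> R \<noteq> [] \<Longrightarrow>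
   last (snk t v b R) = (if b = odd (length R) then ctop t v (last R) else last R)"
proof (induction R arbitrary: b)
  case Nil then show ?case by simp
next
  case (Cons r R)
  show ?case
  proof (cases "R = []")
    case True then show ?thesis using Cons.prems by (auto simp: last_cls last_rev hd_cls cls_nonempty)
  next
    case False
    then show ?thesis using Cons.IH[OF Cons.prems(1,2) False, of "\<not> b"] Cons.prems
      snk_nonempty[OF Cons.prems(1,2) False, of "\<not> b"] by auto
  qed
qed

lemma el_snk: "0 < t \<Longrightarrow> t \<le> v \<Longrightarrow>
   el (snk t v b R) = replicate_mset (sum_list (map (\<lambda>r. nn t v r - 1) R)) t + mset (JJ t v b R)"
proof (induction R arbitrary: b)
  case Nil then show ?case by simp
next
  case (Cons r R)
  show ?case
  proof (cases "R = []")
    case True then show ?thesis by (simp add: el_rev el_cls)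
  next
    case False
    then obtain r' R' where R: "R = r' # R'" by (cases R) auto
    let ?p = "(if b then cls t v r else rev (cls t v r))"
    have pne: "?p \<noteq> []" using cls_nonempty[OF Cons.prems] by simp
    have lp: "last ?p = (if b then ctop t v r else r)"
      using Cons.prems by (simp add: last_cls last_rev hd_cls)
    have hs: "hd (snk t v (\<not> b) R) = (if b then ctop t v r' else r')"
      using hd_snk[OF Cons.prems False, of "\<not> b"] R by auto
    have elp: "el ?p = replicate_mset (nn t v r - 1) t" by (simp add: el_rev el_cls)
    have "el (snk t v b (r # R)) = el ?p + el (snk t v (\<not> b) R) + {#dd (last ?p) (hd (snk t v (\<not> b) R))#}"
      using el_app[OF pne snk_nonempty[OF Cons.prems False]] by simp
    also have "\<dots> = replicate_mset (nn t v r - 1) t +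
        (replicate_mset (sum_list (map (\<lambda>r. nn t v r - 1) R)) t + mset (JJ t v (\<not> b) R))
        + {#(if b then dd (ctop t v r) (ctop t v r') else dd r r')#}"
      using elp Cons.IH[OF Cons.prems] lp hs by auto
    also have "\<dots> = replicate_mset (sum_list (map (\<lambda>r. nn t v r - 1) (r # R))) t + mset (JJ t v b (r # R))"
      using R by (simp add: rep_plus)
    finally show ?thesis .
  qed
qed

lemma JJ_nth: "JJ t v b R = map (\<lambda>j. if b = even j then dd (ctop t v (R ! j)) (ctop t v (R ! Suc j))
     else dd (R ! j) (R ! Suc j)) [0..<length R - 1]"
proof (induction t v b R rule: JJ.induct)
  case (1 t v b r r' R)
  have u: "[0..<length (r # r' # R) - 1] = 0 # map Suc [0..<length (r' # R) - 1]"
    by (simp add: upt_conv_Cons map_Suc_upt del: upt_Suc)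
  show ?case unfolding u using 1 by (simp add: comp_def)
qed auto

lemma fm_union: "(\<And>x. \<not> (P x \<and> Q x)) \<Longrightarrow>
  filter_mset P M + filter_mset Q M = filter_mset (\<lambda>x. P x \<or> Q x) M"
  by (induction M) auto

lemma mset_snk: "0 < t \<Longrightarrow> distinct R \<Longrightarrow> \<forall>r\<in>set R. r < t \<Longrightarrow>
   mset (snk t v b R) = filter_mset (\<lambda>x. x mod t \<in> set R) (mset [0..<v])"
proof (induction R arbitrary: b)
  case Nil then show ?case by (simp add: filter_mset_False)
next
  case (Cons r R)
  have "mset (snk t v b (r # R)) = mset (cls t v r) + mset (snk t v (\<not> b) R)" by simp
  also have "\<dots> = filter_mset (\<lambda>x. x mod t = r) (mset [0..<v]) + filter_mset (\<lambda>x. x mod t \<in> set R) (mset [0..<v])"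
    using Cons mset_cls[of t r v] by simp
  also have "\<dots> = filter_mset (\<lambda>x. x mod t \<in> set (r # R)) (mset [0..<v])"
    using Cons.prems(2) fm_union[of "\<lambda>x. x mod t = r" "\<lambda>x. x mod t \<in> set R" "mset [0..<v]"]
    by (simp del: mset_upt)
  finally show ?case .
qed

lemma length_snk: "length (snk t v b R) = sum_list (map (nn t v) R)"
  by (induction R arbitrary: b) (auto simp: cls_def)

lemma ctop_eq: "0 < t \<Longrightarrow> t \<le> v \<Longrightarrow>
  ctop t v r = r + t * (v div t - 1) + (if r < v mod t then t else 0)"
proof -
  assume a: "0 < t" "t \<le> v"
  then have "1 \<le> v div t" by (simp add: div_greater_zero_iff Suc_le_eq)
  then obtain q where q: "v div t = Suc q" using Suc_le_D by (metis One_nat_def)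
  show ?thesis unfolding ctop_def nn_def q by auto
qed

definition REA :: "nat \<Rightarrow> nat list" where
  "REA t = map (\<lambda>j. if j = t div 2 - 1 then 0 else 2 * j + 2) [0..<t div 2]"
definition ROA :: "nat \<Rightarrow> nat list" where
  "ROA t = map (\<lambda>j. 2 * j + 1) [0..<t div 2]"
definition REB :: "nat \<Rightarrow> nat list" where
  "REB t = map (\<lambda>j. t - 2 - 2 * j) [0..<t div 2]"
definition ROB :: "nat \<Rightarrow> nat list" where
  "ROB t = map (\<lambda>j. if j = 0 then 1 else t + 1 - 2 * j) [0..<t div 2]"

lemma joins_gen:
  assumes "\<And>j. j < length R - 1 \<Longrightarrow> (if even j then dd (ctop t v (R ! j)) (ctop t v (R ! Suc j))
     else dd (R ! j) (R ! Suc j)) = 2"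
  shows "mset (JJ t v True R) = replicate_mset (length R - 1) 2"
proof -
  have "JJ t v True R = map (\<lambda>j. 2) [0..<length R - 1]"
    unfolding JJ_nth using assms by (intro map_cong) auto
  then show ?thesis by (simp add: map_replicate_const)
qed

lemma JEA:
  assumes "t mod 4 = 0" "4 \<le> t" "t \<le> v" "v mod t mod 4 = 1"
  shows "mset (JJ t v True (REA t)) = replicate_mset (t div 2 - 1) 2"
proof -
  define K where "K = t * (v div t - 1)"
  define w where "w = v mod t"
  obtain m where m: "t = 4 * m" using assms(1) by auto
  have w: "w mod 4 = 1" "w < t" using assms by (auto simp: w_def)
  have tp: "ctop t v r = r + K + (if r < w then t else 0)" for r
    using ctop_eq[of t v r] assms unfolding K_def w_def by simp
  have s: "t div 2 = 2 * m" using m by simp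
  have "mset (JJ t v True (REA t)) = replicate_mset (length (REA t) - 1) 2"
  proof (rule joins_gen)
    fix j assume j: "j < length (REA t) - 1"
    then have j': "j < 2 * m - 1" by (simp add: REA_def s)
    then have j2: "j < 2 * m" "Suc j < 2 * m" by simp_all
    have e1: "REA t ! j = 2 * j + 2" using j' j2 by (simp add: REA_def s)
    have e2: "REA t ! Suc j = (if Suc j = 2 * m - 1 then 0 else 2 * j + 4)" using j' j2 by (simp add: REA_def s)
    show "(if even j then dd (ctop t v (REA t ! j)) (ctop t v (REA t ! Suc j))
       else dd (REA t ! j) (REA t ! Suc j)) = 2"
    proof (cases "even j")
      case True
      then obtain i where i: "j = 2 * i" by auto
      show ?thesis
      proof (cases "Suc j = 2 * m - 1")
        case True
        have "w \<le> t - 3" "1 \<le> w" using w m by presburger+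
        then show ?thesis using True \<open>even j\<close> m unfolding e1 e2 tp dd_def by auto
      next
        case False
        have "w \<noteq> 2 * j + 3" "w \<noteq> 2 * j + 4" using w i by presburger+
        then have "(2 * j + 2 < w) = (2 * j + 4 < w)" using w by auto
        then show ?thesis using False \<open>even j\<close> unfolding e1 e2 tp dd_def by auto
      qed
    next
      case False
      then have "Suc j \<noteq> 2 * m - 1" by presburger
      then show ?thesis using False unfolding e1 e2 dd_def by auto
    qed
  qed
  then show ?thesis by (simp add: REA_def)
qed

lemma JOA:
  assumes "t mod 4 = 0" "4 \<le> t" "t \<le> v" "v mod t mod 4 = 1"
  shows "mset (JJ t v True (ROA t)) = replicate_mset (t div 2 - 1) 2"
proof -
  define K where "K = t * (v div t - 1)"
  define w where "w = v mod t"
  obtain m where m: "t = 4 * m" using assms(1) by auto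
  have w: "w mod 4 = 1" "w < t" using assms by (auto simp: w_def)
  have tp: "ctop t v r = r + K + (if r < w then t else 0)" for r
    using ctop_eq[of t v r] assms unfolding K_def w_def by simp
  have s: "t div 2 = 2 * m" using m by simp
  have "mset (JJ t v True (ROA t)) = replicate_mset (length (ROA t) - 1) 2"
  proof (rule joins_gen)
    fix j assume j: "j < length (ROA t) - 1"
    then have j': "j < 2 * m - 1" by (simp add: ROA_def s)
    then have j2: "j < 2 * m" "Suc j < 2 * m" by simp_all
    have e1: "ROA t ! j = 2 * j + 1" using j' j2 by (simp add: ROA_def s)
    have e2: "ROA t ! Suc j = 2 * j + 3" using j' j2 by (simp add: ROA_def s)
    show "(if even j then dd (ctop t v (ROA t ! j)) (ctop t v (ROA t ! Suc j))
       else dd (ROA t ! j) (ROA t ! Suc j)) = 2"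
    proof (cases "even j")
      case True
      then obtain i where i: "j = 2 * i" by auto
      have "w \<noteq> 2 * j + 3" "w \<noteq> 2 * j + 2" using w i by presburger+
      then have "(2 * j + 1 < w) = (2 * j + 3 < w)" using w by auto
      then show ?thesis using True unfolding e1 e2 tp dd_def by auto
    next
      case False
      then show ?thesis unfolding e1 e2 dd_def by auto
    qed
  qed
  then show ?thesis by (simp add: ROA_def)
qed

lemma JEB:
  assumes "t mod 4 = 0" "4 \<le> t" "t \<le> v" "v mod t mod 4 = 3"
  shows "mset (JJ t v True (REB t)) = replicate_mset (t div 2 - 1) 2"
proof -
  define K where "K = t * (v div t - 1)"
  define w where "w = v mod t"
  obtain m where m: "t = 4 * m" using assms(1) by auto
  have w: "w mod 4 = 3" "w < t" using assms by (auto simp: w_def)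
  have tp: "ctop t v r = r + K + (if r < w then t else 0)" for r
    using ctop_eq[of t v r] assms unfolding K_def w_def by simp
  have s: "t div 2 = 2 * m" using m by simp
  have "mset (JJ t v True (REB t)) = replicate_mset (length (REB t) - 1) 2"
  proof (rule joins_gen)
    fix j assume j: "j < length (REB t) - 1"
    then have j': "j < 2 * m - 1" by (simp add: REB_def s)
    then have j2: "j < 2 * m" "Suc j < 2 * m" by simp_all
    have e1: "REB t ! j = t - 2 - 2 * j" using j' j2 by (simp add: REB_def s)
    have e2: "REB t ! Suc j = t - 4 - 2 * j" using j' j2 by (simp add: REB_def s)
    have le: "2 * j + 4 \<le> t" using j' m by simp
    show "(if even j then dd (ctop t v (REB t ! j)) (ctop t v (REB t ! Suc j))
       else dd (REB t ! j) (REB t ! Suc j)) = 2"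
    proof (cases "even j")
      case True
      then obtain i where i: "j = 2 * i" by auto
      have "w \<noteq> t - 3 - 2 * j"
      proof
        assume "w = t - 3 - 2 * j"
        then have "w + 3 + 4 * i = 4 * m" using le i m by linarith
        then show False using w(1) by presburger
      qed
      moreover have "w \<noteq> t - 2 - 2 * j"
      proof
        assume "w = t - 2 - 2 * j"
        then have "w + 2 + 4 * i = 4 * m" using le i m by linarith
        then show False using w(1) by presburger
      qed
      ultimately have "(t - 2 - 2 * j < w) = (t - 4 - 2 * j < w)" using w le by auto
      then show ?thesis using True le unfolding e1 e2 tp dd_def by auto
    next
      case False
      then show ?thesis using le unfolding e1 e2 dd_def by auto
    qed
  qed
  then show ?thesis by (simp add: REB_def)
qed

lemma JOB:
  assumes "t mod 4 = 0" "4 \<le> t" "t \<le> v" "v mod t mod 4 = 3"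
  shows "mset (JJ t v True (ROB t)) = replicate_mset (t div 2 - 1) 2"
proof -
  define K where "K = t * (v div t - 1)"
  define w where "w = v mod t"
  obtain m where m: "t = 4 * m" using assms(1) by auto
  have w: "w mod 4 = 3" "w < t" using assms by (auto simp: w_def)
  have tp: "ctop t v r = r + K + (if r < w then t else 0)" for r
    using ctop_eq[of t v r] assms unfolding K_def w_def by simp
  have s: "t div 2 = 2 * m" using m by simp
  have "mset (JJ t v True (ROB t)) = replicate_mset (length (ROB t) - 1) 2"
  proof (rule joins_gen)
    fix j assume j: "j < length (ROB t) - 1"
    then have j': "j < 2 * m - 1" by (simp add: ROB_def s)
    then have j2: "j < 2 * m" "Suc j < 2 * m" by simp_all
    have e1: "ROB t ! j = (if j = 0 then 1 else t + 1 - 2 * j)" using j' j2 by (simp add: ROB_def s)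
    have e2: "ROB t ! Suc j = t - 1 - 2 * j" using j' j2 by (simp add: ROB_def s)
    have le: "2 * j + 4 \<le> t" using j' m by simp
    show "(if even j then dd (ctop t v (ROB t ! j)) (ctop t v (ROB t ! Suc j))
       else dd (ROB t ! j) (ROB t ! Suc j)) = 2"
    proof (cases "j = 0")
      case True
      have "3 \<le> w" using w by presburger
      then show ?thesis using True le w unfolding e1 e2 tp dd_def by auto
    next
      case j0: False
      show ?thesis
      proof (cases "even j")
        case True
        then obtain i where i: "j = 2 * i" by auto
        have "w \<noteq> t + 1 - 2 * j"
        proof
        assume "w = t + 1 - 2 * j"
        then have "w + 4 * i = 4 * m + 1" using le i m by linarith
        then show False using w(1) by presburger
      qed
        moreover have "w \<noteq> t - 2 * j"
        proof
        assume "w = t - 2 * j"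
        then have "w + 4 * i = 4 * m" using le i m by linarith
        then show False using w(1) by presburger
      qed
        ultimately have "(t + 1 - 2 * j < w) = (t - 1 - 2 * j < w)" using w le by auto
        then show ?thesis using True le j0 unfolding e1 e2 tp dd_def by auto
      next
        case False
        then show ?thesis using le j0 unfolding e1 e2 dd_def by auto
      qed
    qed
  qed
  then show ?thesis by (simp add: ROB_def)
qed

fun Z :: "nat \<Rightarrow> nat list" where
  "Z 0 = [0, 1]"
| "Z (Suc k) = rev (Z k) @ [Suc (Suc k)]"

lemma Z_props: "hd (Z k) = k \<and> last (Z k) = Suc k \<and> length (Z k) = k + 2 \<and>
   mset (Z k) = mset [0..<k + 2] \<and> el (Z k) = add_mset 1 (replicate_mset k 2)"
proof (induction k)
  case 0 then show ?case by (simp add: dd_def)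
next
  case (Suc k)
  have ne: "rev (Z k) \<noteq> []" using Suc by auto
  have "el (Z (Suc k)) = el (rev (Z k)) + el [Suc (Suc k)] + {#dd (last (rev (Z k))) (Suc (Suc k))#}"
    using el_app[OF ne, of "[Suc (Suc k)]"] by simp
  also have "\<dots> = add_mset 1 (replicate_mset (Suc k) 2)"
    using Suc ne by (simp add: el_rev last_rev dd_def)
  finally show ?case using Suc ne by (simp add: hd_rev)
qed

lemma Z_split: "Z k = k # butlast (tl (Z k)) @ [Suc k]"
proof -
  have l: "length (Z k) = k + 2" and h: "hd (Z k) = k" and la: "last (Z k) = Suc k"
    using Z_props[of k] by auto
  obtain a xs where zk: "Z k = a # xs" using l by (cases "Z k") auto
  have "xs \<noteq> []" using l zk by auto
  then have "xs = butlast xs @ [last xs]" by simp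
  then show ?thesis using zk h la by (metis append_butlast_last_id last_ConsR list.sel(1,3) \<open>xs \<noteq> []\<close>)
qed

lemma sum_minus1: "(\<forall>r\<in>set R. 1 \<le> f r) \<Longrightarrow>
   sum_list (map (\<lambda>r. f r - 1) R) + length R = sum_list (map f R)"
  by (induction R) auto

lemma assemble:
  fixes t v0 k :: nat and RE RO :: "nat list"
  assumes t0: "0 < t" and tv: "t \<le> v0" and t4: "t mod 4 = 0"
    and dE: "distinct RE" and dO: "distinct RO"
    and sE: "set RE = {x. x < t \<and> even x}" and sO: "set RO = {x. x < t \<and> odd x}"
    and lE: "length RE = t div 2" and lO: "length RO = t div 2"
    and laE: "last RE = 0" and hO: "hd RO = 1"
    and jE: "mset (JJ t v0 True RE) = replicate_mset (t div 2 - 1) 2"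
    and jO: "mset (JJ t v0 True RO) = replicate_mset (t div 2 - 1) 2"
  shows "\<exists>P. mset P = mset [0..<v0 + k] \<and>
     el P = add_mset 1 (replicate_mset (t - 2 + k) 2 + replicate_mset (v0 - t) t)"
proof -
  obtain m where m: "t = 4 * m" using t4 by auto
  have te: "even t" using m by simp
  have sm: "t div 2 = 2 * m" using m by simp
  define SE where "SE = snk t v0 True RE"
  define SO where "SO = snk t v0 True RO"
  define A where "A = map (\<lambda>y. y + k) SE"
  define C where "C = map (\<lambda>y. y + k) SO"
  define H where "H = butlast (tl (Z k))"
  define P where "P = butlast A @ Z k @ tl C"
  have s2: "t div 2 \<ge> 1" using t0 m sm by simp
  have REne: "RE \<noteq> []" "RO \<noteq> []" using lE lO s2 by auto
  have SEne: "SE \<noteq> []" "SO \<noteq> []" unfolding SE_def SO_def using snk_nonempty[OF t0 tv] REne by auto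
  have oddl: "\<not> odd (length RE)" using lE sm by simp
  have lastSE: "last SE = 0" unfolding SE_def using last_snk[OF t0 tv REne(1), of True] oddl laE by simp
  have hdSO: "hd SO = 1" unfolding SO_def using hd_snk[OF t0 tv REne(2), of True] hO by simp
  have Ane: "A \<noteq> []" and Cne: "C \<noteq> []" using SEne unfolding A_def C_def by auto
  have lA: "last A = k" unfolding A_def using SEne lastSE by (simp add: last_map)
  have hC: "hd C = Suc k" unfolding C_def using SEne hdSO by (simp add: hd_map)
  have Asplit: "A = butlast A @ [k]" using append_butlast_last_id[OF Ane] lA by simp
  have Csplit: "C = Suc k # tl C" using list.collapse[OF Cne] hC by simp
  have Zs: "Z k = k # H @ [Suc k]" unfolding H_def by (rule Z_split)
  have P2: "P = butlast A @ k # (H @ Suc k # tl C)" unfolding P_def using Zs by simp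
  have "el P = el (butlast A @ [k]) + el (k # H @ Suc k # tl C)" unfolding P2 by (rule el_split)
  also have "el (k # H @ Suc k # tl C) = el ((k # H) @ [Suc k]) + el (Suc k # tl C)"
    using el_split[of "k # H" "Suc k" "tl C"] by simp
  finally have elP: "el P = el A + el (Z k) + el C" using Asplit Csplit Zs by simp
  have elA: "el A = replicate_mset (sum_list (map (\<lambda>r. nn t v0 r - 1) RE)) t + replicate_mset (t div 2 - 1) 2"
    unfolding A_def el_shift SE_def el_snk[OF t0 tv] jE lE by simp
  have elC: "el C = replicate_mset (sum_list (map (\<lambda>r. nn t v0 r - 1) RO)) t + replicate_mset (t div 2 - 1) 2"
    unfolding C_def el_shift SO_def el_snk[OF t0 tv] jO lO by simp
  have ltE: "\<forall>r\<in>set RE. r < t" "\<forall>r\<in>set RO. r < t" using sE sO by auto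
  have mS: "mset SE + mset SO = mset [0..<v0]"
  proof -
    have "mset SE + mset SO = filter_mset (\<lambda>x. x mod t \<in> set RE) (mset [0..<v0])
        + filter_mset (\<lambda>x. x mod t \<in> set RO) (mset [0..<v0])"
      unfolding SE_def SO_def using mset_snk[OF t0 dE ltE(1)] mset_snk[OF t0 dO ltE(2)] by simp
    also have "\<dots> = filter_mset (\<lambda>x. x mod t \<in> set RE \<or> x mod t \<in> set RO) (mset [0..<v0])"
      by (rule fm_union) (auto simp: sE sO)
    also have "\<dots> = mset [0..<v0]"
      unfolding filter_mset_eq_conv using t0 by (auto simp: sE sO)
    finally show ?thesis .
  qed
  have lenS: "length SE + length SO = v0" using arg_cong[OF mS, of size] by simp
  have nn1: "\<forall>r\<in>set R. 1 \<le> nn t v0 r" for R using nn_pos[OF t0 tv] by (simp add: Suc_le_eq)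
  have cnt: "sum_list (map (\<lambda>r. nn t v0 r - 1) RE) + sum_list (map (\<lambda>r. nn t v0 r - 1) RO) = v0 - t"
    using sum_minus1[OF nn1[of RE]] sum_minus1[OF nn1[of RO]] lenS lE lO te
    unfolding SE_def SO_def length_snk by auto
  have elP2: "el P = add_mset 1 (replicate_mset (t - 2 + k) 2 + replicate_mset (v0 - t) t)"
  proof -
    have e: "t div 2 - 1 + (t div 2 - 1) + k = t - 2 + k" using sm m s2 by simp
    show ?thesis unfolding elP elA elC using Z_props[of k] cnt e
      by (simp add: rep_plus[symmetric] add.commute add.left_commute)
  qed
  have mH: "mset H = mset [0..<k]"
  proof -
    have "mset (Z k) = mset [0..<k + 2]" using Z_props by blast
    also have "\<dots> = mset [0..<k] + {#k, Suc k#}" by simp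
    finally show ?thesis using Zs by simp
  qed
  have mAC: "mset A + mset C = mset [k..<v0 + k]"
  proof -
    have "mset A + mset C = image_mset (\<lambda>y. y + k) (mset SE + mset SO)" unfolding A_def C_def by simp
    also have "\<dots> = mset (map (\<lambda>y. y + k) [0..<v0])" unfolding mS by simp
    also have "\<dots> = mset [k..<v0 + k]" by (simp add: map_add_upt)
    finally show ?thesis .
  qed
  have mP: "mset P = mset [0..<v0 + k]"
  proof -
    have "mset P = mset (butlast A) + {#k#} + mset H + {#Suc k#} + mset (tl C)"
      unfolding P_def Zs by simp
    also have "\<dots> = mset A + mset H + mset C"
      using arg_cong[OF Asplit, of mset] arg_cong[OF Csplit, of mset] by simp
    also have "\<dots> = mset [0..<k] + mset [k..<v0 + k]" using mH mAC by (simp add: add.commute add.left_commute)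
    also have "\<dots> = mset [0..<v0 + k]"
    proof -
      have eq: "[0..<k] @ [k..<v0 + k] = [0..<v0 + k]" using upt_add_eq_append[of 0 k v0] by (simp add: add.commute)
      show ?thesis by (simp only: eq[symmetric] mset_append)
    qed
    finally show ?thesis .
  qed
  show ?thesis using mP elP2 by blast
qed

lemma REA_props:
  assumes "t mod 4 = 0" "4 \<le> t"
  shows "distinct (REA t) \<and> set (REA t) = {x. x < t \<and> even x} \<and> length (REA t) = t div 2 \<and> last (REA t) = 0"
proof -
  obtain m where m: "t = 4 * m" using assms(1) by auto
  have s: "t div 2 = 2 * m" using m by simp
  have m1: "1 \<le> m" using assms m by simp
  have d: "distinct (REA t)" unfolding REA_def s by (auto simp: distinct_map inj_on_def split: if_splits)
  have st: "set (REA t) = {x. x < t \<and> even x}"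
  proof
    show "set (REA t) \<subseteq> {x. x < t \<and> even x}" unfolding REA_def s using m by auto
  next
    show "{x. x < t \<and> even x} \<subseteq> set (REA t)"
    proof
      fix x assume x: "x \<in> {x. x < t \<and> even x}"
      show "x \<in> set (REA t)"
      proof (cases "x = 0")
        case True
        have "2 * m - 1 < 2 * m" "(if 2 * m - 1 = 2 * m - 1 then 0 else 2 * (2 * m - 1) + 2) = x"
          using m1 True by auto
        then show ?thesis unfolding REA_def s set_map set_upt by (intro image_eqI[of x _ "2 * m - 1"]) auto
      next
        case False
        define i where "i = x div 2 - 1"
        have xi: "x = 2 * i + 2" using x False unfolding i_def by auto
        have "i < 2 * m - 1" using xi x m by auto
        then show ?thesis unfolding REA_def s set_map set_upt using xi
          by (intro image_eqI[of x _ i]) auto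
      qed
    qed
  qed
  have l: "last (REA t) = 0" unfolding REA_def s using m1 by (simp add: last_map)
  show ?thesis using d st l by (simp add: REA_def)
qed

lemma ROA_props:
  assumes "t mod 4 = 0" "4 \<le> t"
  shows "distinct (ROA t) \<and> set (ROA t) = {x. x < t \<and> odd x} \<and> length (ROA t) = t div 2 \<and> hd (ROA t) = 1"
proof -
  obtain m where m: "t = 4 * m" using assms(1) by auto
  have s: "t div 2 = 2 * m" using m by simp
  have m1: "1 \<le> m" using assms m by simp
  have d: "distinct (ROA t)" unfolding ROA_def s by (auto simp: distinct_map inj_on_def)
  have st: "set (ROA t) = {x. x < t \<and> odd x}"
  proof
    show "set (ROA t) \<subseteq> {x. x < t \<and> odd x}" unfolding ROA_def s using m by auto
  next
    show "{x. x < t \<and> odd x} \<subseteq> set (ROA t)"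
    proof
      fix x assume x: "x \<in> {x. x < t \<and> odd x}"
      define i where "i = x div 2"
      have xi: "x = 2 * i + 1" using x unfolding i_def by auto
      have "i < 2 * m" using xi x m by auto
      then show "x \<in> set (ROA t)" unfolding ROA_def s set_map set_upt using xi
        by (intro image_eqI[of x _ i]) auto
    qed
  qed
  have h: "hd (ROA t) = 1" unfolding ROA_def s using m1 by (simp add: hd_map upt_conv_Cons)
  show ?thesis using d st h by (simp add: ROA_def)
qed

lemma REB_props:
  assumes "t mod 4 = 0" "4 \<le> t"
  shows "distinct (REB t) \<and> set (REB t) = {x. x < t \<and> even x} \<and> length (REB t) = t div 2 \<and> last (REB t) = 0"
proof -
  obtain m where m: "t = 4 * m" using assms(1) by auto
  have s: "t div 2 = 2 * m" using m by simp
  have m1: "1 \<le> m" using assms m by simp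
  have d: "distinct (REB t)" unfolding REB_def s using m by (auto simp: distinct_map inj_on_def)
  have st: "set (REB t) = {x. x < t \<and> even x}"
  proof
    show "set (REB t) \<subseteq> {x. x < t \<and> even x}" unfolding REB_def s using m by auto
  next
    show "{x. x < t \<and> even x} \<subseteq> set (REB t)"
    proof
      fix x assume x: "x \<in> {x. x < t \<and> even x}"
      define i where "i = x div 2"
      have xi: "x = 2 * i" using x unfolding i_def by auto
      have lt: "i < 2 * m" using xi x m by auto
      have "x = t - 2 - 2 * (2 * m - 1 - i)" using xi lt m by auto
      then show "x \<in> set (REB t)" unfolding REB_def s set_map set_upt using lt
        by (intro image_eqI[of x _ "2 * m - 1 - i"]) auto
    qed
  qed
  have l: "last (REB t) = 0" unfolding REB_def s using m1 m by (simp add: last_map)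
  show ?thesis using d st l by (simp add: REB_def)
qed

lemma ROB_props:
  assumes "t mod 4 = 0" "4 \<le> t"
  shows "distinct (ROB t) \<and> set (ROB t) = {x. x < t \<and> odd x} \<and> length (ROB t) = t div 2 \<and> hd (ROB t) = 1"
proof -
  obtain m where m: "t = 4 * m" using assms(1) by auto
  have s: "t div 2 = 2 * m" using m by simp
  have m1: "1 \<le> m" using assms m by simp
  have d: "distinct (ROB t)" unfolding ROB_def s using m by (auto simp: distinct_map inj_on_def split: if_splits)
  have st: "set (ROB t) = {x. x < t \<and> odd x}"
  proof
    show "set (ROB t) \<subseteq> {x. x < t \<and> odd x}" unfolding ROB_def s using m by auto
  next
    show "{x. x < t \<and> odd x} \<subseteq> set (ROB t)"
    proof
      fix x assume x: "x \<in> {x. x < t \<and> odd x}"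
      define i where "i = x div 2"
      have xi: "x = 2 * i + 1" using x unfolding i_def by auto
      have lt: "i < 2 * m" using xi x m by auto
      show "x \<in> set (ROB t)"
      proof (cases "i = 0")
        case True
        then show ?thesis unfolding ROB_def s set_map set_upt using xi m1
          by (intro image_eqI[of x _ 0]) auto
      next
        case False
        have "x = t + 1 - 2 * (2 * m - i)" using xi lt m by auto
        then show ?thesis unfolding ROB_def s set_map set_upt using lt False
          by (intro image_eqI[of x _ "2 * m - i"]) auto
      qed
    qed
  qed
  have h: "hd (ROB t) = 1" unfolding ROB_def s using m1 by (simp add: hd_map upt_conv_Cons)
  show ?thesis using d st h by (simp add: ROB_def)
qed

theorem proposition3p10:
  fixes t b c :: nat
  assumes "t \<ge> 4" and "t mod 4 = 0"
    and "b \<ge> t - 2" and "c > 0" and "odd c"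
  shows "has_linear_realization (ms_1_2_t b t c)"
proof -
  define v0 where "v0 = t + c"
  define k where "k = b - (t - 2)"
  have t0: "0 < t" and tv: "t \<le> v0" and te: "t mod 4 = 0" using assms by (auto simp: v0_def)
  have vm: "v0 mod t mod 4 = c mod 4"
  proof -
    have "v0 mod t = c mod t" by (simp add: v0_def)
    moreover have "(4::nat) dvd t" using assms(2) by (simp add: dvd_eq_mod_eq_0)
    then have "c mod t mod 4 = c mod 4" by (rule mod_mod_cancel)
    ultimately show ?thesis by simp
  qed
  have c4: "c mod 4 = 1 \<or> c mod 4 = 3" using assms(5) by presburger
  have "\<exists>P. mset P = mset [0..<v0 + k] \<and>
     el P = add_mset 1 (replicate_mset (t - 2 + k) 2 + replicate_mset (v0 - t) t)"
  proof (cases "c mod 4 = 1")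
    case True
    then have w: "v0 mod t mod 4 = 1" using vm by simp
    show ?thesis
    proof (rule assemble[OF t0 tv te])
      show "distinct (REA t)" "set (REA t) = {x. x < t \<and> even x}"
        "length (REA t) = t div 2" "last (REA t) = 0" using REA_props[OF assms(2,1)] by blast+
      show "distinct (ROA t)" "set (ROA t) = {x. x < t \<and> odd x}"
        "length (ROA t) = t div 2" "hd (ROA t) = 1" using ROA_props[OF assms(2,1)] by blast+
      show "mset (JJ t v0 True (REA t)) = replicate_mset (t div 2 - 1) 2" by (rule JEA[OF assms(2,1) tv w])
      show "mset (JJ t v0 True (ROA t)) = replicate_mset (t div 2 - 1) 2" by (rule JOA[OF assms(2,1) tv w])
    qed
  next
    case False
    then have w: "v0 mod t mod 4 = 3" using vm c4 by simp
    show ?thesis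
    proof (rule assemble[OF t0 tv te])
      show "distinct (REB t)" "set (REB t) = {x. x < t \<and> even x}"
        "length (REB t) = t div 2" "last (REB t) = 0" using REB_props[OF assms(2,1)] by blast+
      show "distinct (ROB t)" "set (ROB t) = {x. x < t \<and> odd x}"
        "length (ROB t) = t div 2" "hd (ROB t) = 1" using ROB_props[OF assms(2,1)] by blast+
      show "mset (JJ t v0 True (REB t)) = replicate_mset (t div 2 - 1) 2" by (rule JEB[OF assms(2,1) tv w])
      show "mset (JJ t v0 True (ROB t)) = replicate_mset (t div 2 - 1) 2" by (rule JOB[OF assms(2,1) tv w])
    qed
  qed
  then obtain P where mP: "mset P = mset [0..<v0 + k]"
    and eP: "el P = add_mset 1 (replicate_mset (t - 2 + k) 2 + replicate_mset (v0 - t) t)" by blast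
  have Vk: "v0 + k = b + c + 2" and b2: "t - 2 + k = b" and ct: "v0 - t = c"
    using assms by (auto simp: v0_def k_def)
  have dP: "distinct P" using mset_eq_imp_distinct_iff[OF mP] by simp
  have "set P = set [0..<v0 + k]" using mset_eq_setD[OF mP] .
  then have sP: "set P = {0..<b + c + 2}" unfolding Vk set_upt .
  have L: "ms_1_2_t b t c = add_mset 1 (replicate_mset b 2 + replicate_mset c t)"
    by (simp add: ms_1_2_t_def)
  have sz: "size (ms_1_2_t b t c) + 1 = b + c + 2" by (simp add: ms_1_2_t_def)
  have "linear_realization (ms_1_2_t b t c) P"
    unfolding linear_realization_def Let_def sz ham_path_def edge_lengths_el
  proof (intro conjI)
    show "\<forall>l\<in>#ms_1_2_t b t c. 0 < l \<and> l \<le> b + c + 2 - 1"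
      using assms unfolding L by auto
    show "distinct P" by (rule dP)
    show "set P = {0..<b + c + 2}" by (rule sP)
    show "el P = ms_1_2_t b t c" unfolding eP L b2 ct ..
  qed
  then show ?thesis unfolding has_linear_realization_def by blast
qed

end
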